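(* Let $B$ be a non-abelian group, $H$ a finitely generated infinite group with fixed finite generating set $X=\{x_1,\dots,x_n\}$, $W=B\wr H$, and fix $a,b\in B$ with $ab\ne ba$. For $S\subseteq H$ define $\bar a,\bar b_S\in B^H$ by $\bar a(1)=a$, $\bar a(x)=1$ for $x\neq1$, and $\bar b_S(x)=b$ for $x\in S$, $\bar b_S(x)=1$ for $x\notin S$, and set $Y_S=(x_1,\dots,x_n,\bar a,\bar b_S)$. Let $S,T\in D_R(H)$ satisfy $S\cap \mathrm{Ball}_H(2r)=T\cap\mathrm{Ball}_H(2r)$ for some $r\in\mathbb N$. Then a word $w_S$ of length at most $r$ in the alphabet $Y_S^{\pm1}$ represents $1$ in $W$ if and only if the word $w_T$ in $Y_T^{\pm1}$ obtained from $w_S$ by replacing each occurrence of $\bar b_S^{\pm1}$ with $\bar b_T^{\pm1}$ represents $1$ in $W$.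
   Context: $B^H$ is the group of all functions $H\to B$ with pointwise multiplication; $B\wr H=B^H\rtimes H$ with $(hfh^{-1})(x)=f(h^{-1}x)$. $|h|_X$ denotes word length of $h\in H$ with respect to $X$ and $\mathrm{Ball}_H(m)=\{h\in H:|h|_X\le m\}$. $2^H$ is the space of all subsets of $H$ with the product topology; $H$ acts on it by right multiplication $S\mapsto Sh$, and $D_R(H)$ is the set of $S\subseteq H$ whose orbit $\{Sh:h\in H\}$ is dense in $2^H$. *)

theory Defs
  imports "HOL-Analysis.Analysis" "HOL-Algebra.Group" "HOL-Algebra.Generated_Groups"
begin

(* Elements are pairs (f, h) with f : carrier H \<rightarrow> carrier B (extensional) and h \<in> carrier H;
   (f,h)(g,k) = (f \<cdot> (h g h^-1), hk) where (h g h^-1)(x) = g(h^-1 x). *)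
definition wreath_prod :: "('b, 'c) monoid_scheme \<Rightarrow> ('h, 'd) monoid_scheme
    \<Rightarrow> (('h \<Rightarrow> 'b) \<times> 'h) monoid" where
  "wreath_prod B H =
     \<lparr> carrier = (carrier H \<rightarrow>\<^sub>E carrier B) \<times> carrier H,
       mult = (\<lambda>(f, h) (g, k).
                 (restrict (\<lambda>x. f x \<otimes>\<^bsub>B\<^esub> g (inv\<^bsub>H\<^esub> h \<otimes>\<^bsub>H\<^esub> x)) (carrier H),
                  h \<otimes>\<^bsub>H\<^esub> k)),
       one = (restrict (\<lambda>_. \<one>\<^bsub>B\<^esub>) (carrier H), \<one>\<^bsub>H\<^esub>) \<rparr>"

(* Evaluation in H of a word over X^{\<plusminus>1}; X given as list xs, a letter is (index, sign),
   sign True = x_i, False = x_i^{-1}. *)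
definition eval_H_word :: "('h, 'd) monoid_scheme \<Rightarrow> 'h list \<Rightarrow> (nat \<times> bool) list \<Rightarrow> 'h" where
  "eval_H_word H xs w =
     foldr (\<lambda>(i, e) acc. (if e then xs ! i else inv\<^bsub>H\<^esub> (xs ! i)) \<otimes>\<^bsub>H\<^esub> acc) w \<one>\<^bsub>H\<^esub>"

definition word_length :: "('h, 'd) monoid_scheme \<Rightarrow> 'h list \<Rightarrow> 'h \<Rightarrow> nat" where
  "word_length H xs h =
     (LEAST k. \<exists>w. length w = k \<and> (\<forall>(i, e) \<in> set w. i < length xs) \<and> eval_H_word H xs w = h)"

definition ball_H :: "('h, 'd) monoid_scheme \<Rightarrow> 'h list \<Rightarrow> nat \<Rightarrow> 'h set" where
  "ball_H H xs m = {h \<in> carrier H. word_length H xs h \<le> m}"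

(* 2^H with the product topology, subsets of H identified with their indicator functions
   carrier H \<rightarrow> bool (extensional), each factor {False, True} discrete. *)
definition subsets_topology :: "('h, 'd) monoid_scheme \<Rightarrow> ('h \<Rightarrow> bool) topology" where
  "subsets_topology H = product_topology (\<lambda>_. discrete_topology (UNIV :: bool set)) (carrier H)"

definition set_ind :: "('h, 'd) monoid_scheme \<Rightarrow> 'h set \<Rightarrow> ('h \<Rightarrow> bool)" where
  "set_ind H S = restrict (\<lambda>x. x \<in> S) (carrier H)"

definition right_transl :: "('h, 'd) monoid_scheme \<Rightarrow> 'h set \<Rightarrow> 'h \<Rightarrow> 'h set" where
  "right_transl H S h = (\<lambda>s. s \<otimes>\<^bsub>H\<^esub> h) ` S"

definition D_R :: "('h, 'd) monoid_scheme \<Rightarrow> 'h set set" where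
  "D_R H = {S. S \<subseteq> carrier H \<and>
     (subsets_topology H) closure_of {set_ind H (right_transl H S h) | h. h \<in> carrier H}
       = topspace (subsets_topology H)}"

(* The generating tuple Y_S = (x_1,..,x_n, abar, bbar_S), indexed 0..n+1 *)
definition Y_gen :: "('b, 'c) monoid_scheme \<Rightarrow> ('h, 'd) monoid_scheme \<Rightarrow> 'h list
    \<Rightarrow> 'b \<Rightarrow> 'b \<Rightarrow> 'h set \<Rightarrow> nat \<Rightarrow> ('h \<Rightarrow> 'b) \<times> 'h" where
  "Y_gen B H xs a b S i =
     (if i < length xs then (restrict (\<lambda>_. \<one>\<^bsub>B\<^esub>) (carrier H), xs ! i)
      else if i = length xs then
        (restrict (\<lambda>x. if x = \<one>\<^bsub>H\<^esub> then a else \<one>\<^bsub>B\<^esub>) (carrier H), \<one>\<^bsub>H\<^esub>)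
      else (restrict (\<lambda>x. if x \<in> S then b else \<one>\<^bsub>B\<^esub>) (carrier H), \<one>\<^bsub>H\<^esub>))"

definition eval_W_word :: "('b, 'c) monoid_scheme \<Rightarrow> ('h, 'd) monoid_scheme \<Rightarrow> 'h list
    \<Rightarrow> 'b \<Rightarrow> 'b \<Rightarrow> 'h set \<Rightarrow> (nat \<times> bool) list \<Rightarrow> ('h \<Rightarrow> 'b) \<times> 'h" where
  "eval_W_word B H xs a b S w =
     foldr (\<lambda>(i, e) acc.
        (if e then Y_gen B H xs a b S i else inv\<^bsub>wreath_prod B H\<^esub> (Y_gen B H xs a b S i))
          \<otimes>\<^bsub>wreath_prod B H\<^esub> acc) w \<one>\<^bsub>wreath_prod B H\<^esub>"

end

theory Submission
  imports Defs
begin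

lemma wreath_group:
  assumes B: "group B" and H: "group H"
  shows "group (wreath_prod B H)"
proof -
  interpret B: group B by fact
  interpret H: group H by fact
  show ?thesis
  proof (rule groupI)
    fix x y assume "x \<in> carrier (wreath_prod B H)" "y \<in> carrier (wreath_prod B H)"
    then show "x \<otimes>\<^bsub>wreath_prod B H\<^esub> y \<in> carrier (wreath_prod B H)"
      by (cases x; cases y) (auto simp: wreath_prod_def PiE_iff)
  next
    show "\<one>\<^bsub>wreath_prod B H\<^esub> \<in> carrier (wreath_prod B H)"
      by (auto simp: wreath_prod_def)
  next
    fix x y z assume "x \<in> carrier (wreath_prod B H)" "y \<in> carrier (wreath_prod B H)"
      "z \<in> carrier (wreath_prod B H)"
    then show "x \<otimes>\<^bsub>wreath_prod B H\<^esub> y \<otimes>\<^bsub>wreath_prod B H\<^esub> z =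
         x \<otimes>\<^bsub>wreath_prod B H\<^esub> (y \<otimes>\<^bsub>wreath_prod B H\<^esub> z)"
      by (cases x; cases y; cases z)
        (auto simp: wreath_prod_def PiE_iff H.m_assoc B.m_assoc H.inv_mult_group intro!: restrict_ext)
  next
    fix x assume "x \<in> carrier (wreath_prod B H)"
    then show "\<one>\<^bsub>wreath_prod B H\<^esub> \<otimes>\<^bsub>wreath_prod B H\<^esub> x = x"
      by (cases x) (auto simp: wreath_prod_def PiE_iff intro!: extensionalityI[where A="carrier H"])
  next
    fix x assume "x \<in> carrier (wreath_prod B H)"
    then obtain f h where x: "x = (f, h)" "f \<in> carrier H \<rightarrow>\<^sub>E carrier B" "h \<in> carrier H"
      by (cases x) (auto simp: wreath_prod_def)
    show "\<exists>y\<in>carrier (wreath_prod B H). y \<otimes>\<^bsub>wreath_prod B H\<^esub> x = \<one>\<^bsub>wreath_prod B H\<^esub>"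
      apply (rule bexI[where x="(restrict (\<lambda>y. inv\<^bsub>B\<^esub> f (h \<otimes>\<^bsub>H\<^esub> y)) (carrier H), inv\<^bsub>H\<^esub> h)"])
      using x by (auto simp: wreath_prod_def PiE_iff H.m_assoc[symmetric] intro!: restrict_ext)
  qed
qed


definition hl :: "('h,'d) monoid_scheme \<Rightarrow> 'h list \<Rightarrow> nat \<times> bool \<Rightarrow> 'h" where
 "hl H xs l = (if fst l < length xs then (if snd l then xs ! fst l else inv\<^bsub>H\<^esub> (xs ! fst l)) else \<one>\<^bsub>H\<^esub>)"

fun hw :: "('h,'d) monoid_scheme \<Rightarrow> 'h list \<Rightarrow> (nat \<times> bool) list \<Rightarrow> 'h" where
  "hw H xs [] = \<one>\<^bsub>H\<^esub>"
| "hw H xs (l # w) = hl H xs l \<otimes>\<^bsub>H\<^esub> hw H xs w"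

definition cl :: "('b,'c) monoid_scheme \<Rightarrow> ('h,'d) monoid_scheme \<Rightarrow> 'h list \<Rightarrow> 'b \<Rightarrow> 'b \<Rightarrow> 'h set
   \<Rightarrow> nat \<times> bool \<Rightarrow> 'h \<Rightarrow> 'b" where
 "cl B H xs a b Z l y = (if fst l < length xs then \<one>\<^bsub>B\<^esub>
    else if fst l = length xs then (if y = \<one>\<^bsub>H\<^esub> then (if snd l then a else inv\<^bsub>B\<^esub> a) else \<one>\<^bsub>B\<^esub>)
    else (if y \<in> Z then (if snd l then b else inv\<^bsub>B\<^esub> b) else \<one>\<^bsub>B\<^esub>))"

fun Fz :: "('b,'c) monoid_scheme \<Rightarrow> ('h,'d) monoid_scheme \<Rightarrow> 'h list \<Rightarrow> 'b \<Rightarrow> 'b \<Rightarrow> 'h set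
   \<Rightarrow> (nat \<times> bool) list \<Rightarrow> 'h \<Rightarrow> 'b" where
  "Fz B H xs a b Z [] x = \<one>\<^bsub>B\<^esub>"
| "Fz B H xs a b Z (l # w) x = cl B H xs a b Z l x \<otimes>\<^bsub>B\<^esub> Fz B H xs a b Z w (inv\<^bsub>H\<^esub> (hl H xs l) \<otimes>\<^bsub>H\<^esub> x)"

fun bpts :: "('h,'d) monoid_scheme \<Rightarrow> 'h list \<Rightarrow> (nat \<times> bool) list \<Rightarrow> 'h set" where
  "bpts H xs [] = {}"
| "bpts H xs (l # w) = (if length xs < fst l then {\<one>\<^bsub>H\<^esub>} else {}) \<union>
      (\<lambda>p. p \<otimes>\<^bsub>H\<^esub> inv\<^bsub>H\<^esub> (hl H xs l)) ` bpts H xs w"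

fun allpts :: "('h,'d) monoid_scheme \<Rightarrow> 'h list \<Rightarrow> (nat \<times> bool) list \<Rightarrow> 'h set" where
  "allpts H xs [] = {\<one>\<^bsub>H\<^esub>}"
| "allpts H xs (l # w) = insert \<one>\<^bsub>H\<^esub> ((\<lambda>p. p \<otimes>\<^bsub>H\<^esub> inv\<^bsub>H\<^esub> (hl H xs l)) ` allpts H xs w)"

lemma hl_carrier: assumes "group H" "set xs \<subseteq> carrier H" shows "hl H xs l \<in> carrier H"
proof -
  interpret H: group H by fact
  have "fst l < length xs \<Longrightarrow> xs ! fst l \<in> carrier H" using assms(2) nth_mem by blast
  then show ?thesis by (auto simp: hl_def)
qed

lemma cl_carrier: assumes "group B" "a \<in> carrier B" "b \<in> carrier B" shows "cl B H xs a b Z l y \<in> carrier B"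
proof -
  interpret B: group B by fact
  show ?thesis using assms(2,3) by (auto simp: cl_def)
qed

lemma Fz_carrier: assumes "group B" "a \<in> carrier B" "b \<in> carrier B" shows "Fz B H xs a b Z w x \<in> carrier B"
proof -
  interpret B: group B by fact
  show ?thesis by (induction w arbitrary: x) (auto intro!: cl_carrier assms)
qed

lemma allpts_carrier: assumes "group H" "set xs \<subseteq> carrier H" shows "allpts H xs w \<subseteq> carrier H"
proof -
  interpret H: group H by fact
  show ?thesis by (induction w) (auto intro!: hl_carrier assms)
qed

lemma bpts_allpts: "bpts H xs w \<subseteq> allpts H xs w"
  by (induction w) auto

lemma finite_allpts: "finite (allpts H xs w)"
  by (induction w) auto

lemma finite_bpts: "finite (bpts H xs w)"
  by (induction w) auto

lemma letter_val:
  assumes B: "group B" and H: "group H" and xs: "set xs \<subseteq> carrier H"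
    and a: "a \<in> carrier B" and b: "b \<in> carrier B"
  shows "(if snd l then Y_gen B H xs a b Z (fst l) else inv\<^bsub>wreath_prod B H\<^esub> (Y_gen B H xs a b Z (fst l)))
       = (restrict (cl B H xs a b Z l) (carrier H), hl H xs l)"
proof -
  interpret B: group B by fact
  interpret H: group H by fact
  interpret W: group "wreath_prod B H" by (rule wreath_group[OF B H])
  have nth: "fst l < length xs \<Longrightarrow> xs ! fst l \<in> carrier H" using xs by auto
  have Yc: "Y_gen B H xs a b Z (fst l) \<in> carrier (wreath_prod B H)"
    using nth a b by (auto simp: Y_gen_def wreath_prod_def)
  have yc: "(restrict (cl B H xs a b Z l) (carrier H), hl H xs l) \<in> carrier (wreath_prod B H)"
    using hl_carrier[OF H xs] by (auto simp: wreath_prod_def PiE_iff cl_carrier[OF B a b])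
  show ?thesis
  proof (cases "snd l")
    case True
    then show ?thesis
      by (auto simp: Y_gen_def cl_def hl_def intro!: restrict_ext)
  next
    case False
    have "(restrict (cl B H xs a b Z l) (carrier H), hl H xs l) \<otimes>\<^bsub>wreath_prod B H\<^esub> Y_gen B H xs a b Z (fst l)
        = \<one>\<^bsub>wreath_prod B H\<^esub>"
      using False nth a b
      by (auto simp: Y_gen_def cl_def hl_def wreath_prod_def intro!: restrict_ext)
    then show ?thesis using False W.inv_equality[OF _ Yc yc] by simp
  qed
qed

lemma restrict_eq_iff: "(restrict f A = restrict g A) = (\<forall>x\<in>A. f x = g x)"
  by (metis restrict_apply' restrict_ext)

lemma eval_closed:
  assumes B: "group B" and H: "group H" and xs: "set xs \<subseteq> carrier H"
    and a: "a \<in> carrier B" and b: "b \<in> carrier B"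
  shows "eval_W_word B H xs a b Z w = (restrict (Fz B H xs a b Z w) (carrier H), hw H xs w)"
proof (induction w)
  case Nil
  then show ?case by (simp add: eval_W_word_def wreath_prod_def restrict_def)
next
  case (Cons l w)
  interpret H: group H by fact
  have e: "eval_W_word B H xs a b Z (l # w) =
     (if snd l then Y_gen B H xs a b Z (fst l) else inv\<^bsub>wreath_prod B H\<^esub> (Y_gen B H xs a b Z (fst l)))
       \<otimes>\<^bsub>wreath_prod B H\<^esub> eval_W_word B H xs a b Z w"
    by (cases l) (simp add: eval_W_word_def)
  have hc: "hl H xs l \<in> carrier H" by (rule hl_carrier[OF H xs])
  show ?case unfolding e letter_val[OF assms] Cons
    using hc by (auto simp: wreath_prod_def intro!: restrict_ext)
qed

lemma loc1:
  assumes H: "group H" and xs: "set xs \<subseteq> carrier H"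
  shows "x \<in> carrier H \<Longrightarrow> \<forall>p\<in>bpts H xs w. (p \<otimes>\<^bsub>H\<^esub> x \<in> Z1 \<longleftrightarrow> p \<otimes>\<^bsub>H\<^esub> x \<in> Z2)
    \<Longrightarrow> Fz B H xs a b Z1 w x = Fz B H xs a b Z2 w x"
proof (induction w arbitrary: x)
  case Nil
  then show ?case by simp
next
  case (Cons l w)
  interpret H: group H by fact
  have hc: "hl H xs l \<in> carrier H" by (rule hl_carrier[OF H xs])
  have c: "cl B H xs a b Z1 l x = cl B H xs a b Z2 l x"
    using Cons.prems by (auto simp: cl_def)
  have pc: "\<forall>p\<in>bpts H xs w. p \<in> carrier H" using allpts_carrier[OF H xs, of w] bpts_allpts[of H xs w] by blast
  have "Fz B H xs a b Z1 w (inv\<^bsub>H\<^esub> (hl H xs l) \<otimes>\<^bsub>H\<^esub> x) = Fz B H xs a b Z2 w (inv\<^bsub>H\<^esub> (hl H xs l) \<otimes>\<^bsub>H\<^esub> x)"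
  proof (rule Cons.IH)
    show "inv\<^bsub>H\<^esub> hl H xs l \<otimes>\<^bsub>H\<^esub> x \<in> carrier H" using hc Cons.prems by simp
    show "\<forall>p\<in>bpts H xs w. (p \<otimes>\<^bsub>H\<^esub> (inv\<^bsub>H\<^esub> hl H xs l \<otimes>\<^bsub>H\<^esub> x) \<in> Z1) = (p \<otimes>\<^bsub>H\<^esub> (inv\<^bsub>H\<^esub> hl H xs l \<otimes>\<^bsub>H\<^esub> x) \<in> Z2)"
    proof
      fix p assume p: "p \<in> bpts H xs w"
      then have "(p \<otimes>\<^bsub>H\<^esub> inv\<^bsub>H\<^esub> hl H xs l) \<otimes>\<^bsub>H\<^esub> x \<in> Z1 \<longleftrightarrow> (p \<otimes>\<^bsub>H\<^esub> inv\<^bsub>H\<^esub> hl H xs l) \<otimes>\<^bsub>H\<^esub> x \<in> Z2"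
        using Cons.prems(2) by auto
      then show "(p \<otimes>\<^bsub>H\<^esub> (inv\<^bsub>H\<^esub> hl H xs l \<otimes>\<^bsub>H\<^esub> x) \<in> Z1) = (p \<otimes>\<^bsub>H\<^esub> (inv\<^bsub>H\<^esub> hl H xs l \<otimes>\<^bsub>H\<^esub> x) \<in> Z2)"
        using p pc hc Cons.prems(1) by (simp add: H.m_assoc)
    qed
  qed
  then show ?case using c by simp
qed

lemma loc2:
  assumes H: "group H" and xs: "set xs \<subseteq> carrier H"
  shows "x \<in> carrier H \<Longrightarrow> y \<in> carrier H \<Longrightarrow> \<forall>p\<in>bpts H xs w. (p \<otimes>\<^bsub>H\<^esub> x \<in> Z1 \<longleftrightarrow> p \<otimes>\<^bsub>H\<^esub> y \<in> Z2)
    \<Longrightarrow> \<forall>p\<in>allpts H xs w. p \<otimes>\<^bsub>H\<^esub> x \<noteq> \<one>\<^bsub>H\<^esub> \<and> p \<otimes>\<^bsub>H\<^esub> y \<noteq> \<one>\<^bsub>H\<^esub>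
    \<Longrightarrow> Fz B H xs a b Z1 w x = Fz B H xs a b Z2 w y"
proof (induction w arbitrary: x y)
  case Nil
  then show ?case by simp
next
  case (Cons l w)
  interpret H: group H by fact
  have hc: "hl H xs l \<in> carrier H" by (rule hl_carrier[OF H xs])
  have c: "cl B H xs a b Z1 l x = cl B H xs a b Z2 l y"
    using Cons.prems by (auto simp: cl_def)
  have pc: "\<forall>p\<in>allpts H xs w. p \<in> carrier H" using allpts_carrier[OF H xs] by blast
  have pcb: "\<forall>p\<in>bpts H xs w. p \<in> carrier H" using allpts_carrier[OF H xs, of w] bpts_allpts[of H xs w] by blast
  have "Fz B H xs a b Z1 w (inv\<^bsub>H\<^esub> (hl H xs l) \<otimes>\<^bsub>H\<^esub> x) = Fz B H xs a b Z2 w (inv\<^bsub>H\<^esub> (hl H xs l) \<otimes>\<^bsub>H\<^esub> y)"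
  proof (rule Cons.IH)
    show "inv\<^bsub>H\<^esub> hl H xs l \<otimes>\<^bsub>H\<^esub> x \<in> carrier H" using hc Cons.prems by simp
    show "inv\<^bsub>H\<^esub> hl H xs l \<otimes>\<^bsub>H\<^esub> y \<in> carrier H" using hc Cons.prems by simp
    show "\<forall>p\<in>bpts H xs w. (p \<otimes>\<^bsub>H\<^esub> (inv\<^bsub>H\<^esub> hl H xs l \<otimes>\<^bsub>H\<^esub> x) \<in> Z1) = (p \<otimes>\<^bsub>H\<^esub> (inv\<^bsub>H\<^esub> hl H xs l \<otimes>\<^bsub>H\<^esub> y) \<in> Z2)"
    proof
      fix p assume p: "p \<in> bpts H xs w"
      then have "(p \<otimes>\<^bsub>H\<^esub> inv\<^bsub>H\<^esub> hl H xs l) \<otimes>\<^bsub>H\<^esub> x \<in> Z1 \<longleftrightarrow> (p \<otimes>\<^bsub>H\<^esub> inv\<^bsub>H\<^esub> hl H xs l) \<otimes>\<^bsub>H\<^esub> y \<in> Z2"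
        using Cons.prems(3) by auto
      then show "(p \<otimes>\<^bsub>H\<^esub> (inv\<^bsub>H\<^esub> hl H xs l \<otimes>\<^bsub>H\<^esub> x) \<in> Z1) = (p \<otimes>\<^bsub>H\<^esub> (inv\<^bsub>H\<^esub> hl H xs l \<otimes>\<^bsub>H\<^esub> y) \<in> Z2)"
        using p pcb hc Cons.prems(1,2) by (simp add: H.m_assoc)
    qed
    show "\<forall>p\<in>allpts H xs w. p \<otimes>\<^bsub>H\<^esub> (inv\<^bsub>H\<^esub> hl H xs l \<otimes>\<^bsub>H\<^esub> x) \<noteq> \<one>\<^bsub>H\<^esub> \<and> p \<otimes>\<^bsub>H\<^esub> (inv\<^bsub>H\<^esub> hl H xs l \<otimes>\<^bsub>H\<^esub> y) \<noteq> \<one>\<^bsub>H\<^esub>"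
    proof
      fix p assume p: "p \<in> allpts H xs w"
      then have "(p \<otimes>\<^bsub>H\<^esub> inv\<^bsub>H\<^esub> hl H xs l) \<otimes>\<^bsub>H\<^esub> x \<noteq> \<one>\<^bsub>H\<^esub> \<and> (p \<otimes>\<^bsub>H\<^esub> inv\<^bsub>H\<^esub> hl H xs l) \<otimes>\<^bsub>H\<^esub> y \<noteq> \<one>\<^bsub>H\<^esub>"
        using Cons.prems(4) by auto
      then show "p \<otimes>\<^bsub>H\<^esub> (inv\<^bsub>H\<^esub> hl H xs l \<otimes>\<^bsub>H\<^esub> x) \<noteq> \<one>\<^bsub>H\<^esub> \<and> p \<otimes>\<^bsub>H\<^esub> (inv\<^bsub>H\<^esub> hl H xs l \<otimes>\<^bsub>H\<^esub> y) \<noteq> \<one>\<^bsub>H\<^esub>"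
        using p pc hc Cons.prems(1,2) by (simp add: H.m_assoc)
    qed
  qed
  then show ?case using c by simp
qed


lemma evalH_Cons: "fst l < length xs \<Longrightarrow> eval_H_word H xs (l # u) = hl H xs l \<otimes>\<^bsub>H\<^esub> eval_H_word H xs u"
  by (cases l) (simp add: eval_H_word_def hl_def)

lemma evalH_Nil: "eval_H_word H xs [] = \<one>\<^bsub>H\<^esub>"
  by (simp add: eval_H_word_def)

lemma evalH_carrier:
  assumes H: "group H" and xs: "set xs \<subseteq> carrier H"
  shows "\<forall>l\<in>set u. fst l < length xs \<Longrightarrow> eval_H_word H xs u \<in> carrier H"
proof (induction u)
  case Nil
  interpret H: group H by fact
  show ?case by (simp add: evalH_Nil)
next
  case (Cons l u)
  interpret H: group H by fact
  show ?case using Cons hl_carrier[OF H xs] by (simp add: evalH_Cons)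
qed

lemma evalH_append:
  assumes H: "group H" and xs: "set xs \<subseteq> carrier H"
  shows "\<forall>l\<in>set u. fst l < length xs \<Longrightarrow> \<forall>l\<in>set v. fst l < length xs \<Longrightarrow>
     eval_H_word H xs (u @ v) = eval_H_word H xs u \<otimes>\<^bsub>H\<^esub> eval_H_word H xs v"
proof (induction u)
  case Nil
  interpret H: group H by fact
  show ?case using evalH_carrier[OF H xs Nil(2)] by (simp add: evalH_Nil)
next
  case (Cons l u)
  interpret H: group H by fact
  show ?case using Cons hl_carrier[OF H xs] evalH_carrier[OF H xs]
    by (simp add: evalH_Cons H.m_assoc)
qed

lemma allpts_words:
  assumes H: "group H" and xs: "set xs \<subseteq> carrier H"
  shows "p \<in> allpts H xs w \<Longrightarrow>
    (\<exists>u. (\<forall>l\<in>set u. fst l < length xs) \<and> length u \<le> length w \<and> eval_H_word H xs u = p) \<and>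
    (\<exists>v. (\<forall>l\<in>set v. fst l < length xs) \<and> length v \<le> length w \<and> eval_H_word H xs v = inv\<^bsub>H\<^esub> p)"
proof (induction w arbitrary: p)
  case Nil
  interpret H: group H by fact
  show ?case using Nil by (intro conjI exI[where x="[]"]) (auto simp: evalH_Nil)
next
  case (Cons l w)
  interpret H: group H by fact
  have hc: "hl H xs l \<in> carrier H" by (rule hl_carrier[OF H xs])
  show ?case
  proof (cases "p = \<one>\<^bsub>H\<^esub>")
    case True
    then show ?thesis by (intro conjI exI[where x="[]"]) (auto simp: evalH_Nil)
  next
    case False
    then obtain q where q: "q \<in> allpts H xs w" and p: "p = q \<otimes>\<^bsub>H\<^esub> inv\<^bsub>H\<^esub> hl H xs l"
      using Cons.prems by auto
    have qc: "q \<in> carrier H" using q allpts_carrier[OF H xs] by blast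
    obtain u where u: "\<forall>l\<in>set u. fst l < length xs" "length u \<le> length w" "eval_H_word H xs u = q"
      using Cons.IH[OF q] by blast
    obtain v where v: "\<forall>l\<in>set v. fst l < length xs" "length v \<le> length w" "eval_H_word H xs v = inv\<^bsub>H\<^esub> q"
      using Cons.IH[OF q] by blast
    show ?thesis
    proof (cases "fst l < length xs")
      case True
      have nc: "xs ! fst l \<in> carrier H" using True xs nth_mem by blast
      have hinv: "hl H xs (fst l, \<not> snd l) = inv\<^bsub>H\<^esub> hl H xs l"
        using True nc by (auto simp: hl_def)
      have e1: "eval_H_word H xs (u @ [(fst l, \<not> snd l)]) = p"
        using u True hinv hc qc p
        by (simp add: evalH_append[OF H xs] evalH_Cons evalH_Nil)
      have e2: "eval_H_word H xs (l # v) = inv\<^bsub>H\<^esub> p"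
        using v True hc qc p by (simp add: evalH_Cons H.inv_mult_group)
      show ?thesis
        apply (intro conjI)
         apply (rule exI[where x="u @ [(fst l, \<not> snd l)]"]) using u True e1 apply simp
        apply (rule exI[where x="l # v"]) using v True e2 by simp
    next
      case False
      then have "hl H xs l = \<one>\<^bsub>H\<^esub>" by (simp add: hl_def)
      then have "p = q" using p qc by simp
      then show ?thesis using u v by (intro conjI exI) auto
    qed
  qed
qed

lemma ball_lem:
  assumes H: "group H" and xs: "set xs \<subseteq> carrier H"
    and p: "p \<in> bpts H xs w" and q: "q \<in> allpts H xs w" and len: "length w \<le> r"
  shows "p \<otimes>\<^bsub>H\<^esub> inv\<^bsub>H\<^esub> q \<in> ball_H H xs (2 * r)"
proof -
  interpret H: group H by fact
  have p': "p \<in> allpts H xs w" using p bpts_allpts[of H xs w] by blast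
  obtain u where u: "\<forall>l\<in>set u. fst l < length xs" "length u \<le> length w" "eval_H_word H xs u = p"
    using allpts_words[OF H xs p'] by blast
  obtain v where v: "\<forall>l\<in>set v. fst l < length xs" "length v \<le> length w" "eval_H_word H xs v = inv\<^bsub>H\<^esub> q"
    using allpts_words[OF H xs q] by blast
  have e: "eval_H_word H xs (u @ v) = p \<otimes>\<^bsub>H\<^esub> inv\<^bsub>H\<^esub> q"
    using u v by (simp add: evalH_append[OF H xs])
  have valid: "\<forall>(i, e) \<in> set (u @ v). i < length xs" using u v by auto
  have "word_length H xs (p \<otimes>\<^bsub>H\<^esub> inv\<^bsub>H\<^esub> q) \<le> length (u @ v)"
    unfolding word_length_def
    by (rule Least_le) (use e valid in blast)
  also have "\<dots> \<le> 2 * r" using u v len by simp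
  finally have "word_length H xs (p \<otimes>\<^bsub>H\<^esub> inv\<^bsub>H\<^esub> q) \<le> 2 * r" .
  moreover have "p \<otimes>\<^bsub>H\<^esub> inv\<^bsub>H\<^esub> q \<in> carrier H"
    using p' q allpts_carrier[OF H xs] by blast
  ultimately show ?thesis by (simp add: ball_H_def)
qed

lemma dense_base:
  assumes H: "group H" and S: "S \<in> D_R H" and F: "finite F" "F \<subseteq> carrier H"
  shows "\<exists>g\<in>carrier H. \<forall>p\<in>F. (p \<otimes>\<^bsub>H\<^esub> inv\<^bsub>H\<^esub> g \<in> S \<longleftrightarrow> p \<in> P)"
proof -
  interpret H: group H by fact
  have Ssub: "S \<subseteq> carrier H" and clo: "(subsets_topology H) closure_of
      {set_ind H (right_transl H S h) | h. h \<in> carrier H} = topspace (subsets_topology H)"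
    using S by (auto simp: D_R_def)
  have top: "topspace (subsets_topology H) = (carrier H \<rightarrow>\<^sub>E (UNIV :: bool set))"
    by (simp add: subsets_topology_def)
  define z where "z = set_ind H P"
  have zt: "z \<in> topspace (subsets_topology H)" by (simp add: top z_def set_ind_def)
  define U where "U = PiE (carrier H) (\<lambda>i. if i \<in> F then {(i \<in> P)} else (UNIV :: bool set))"
  have "{i \<in> carrier H. (if i \<in> F then {(i \<in> P)} else (UNIV :: bool set)) \<noteq> topspace (discrete_topology UNIV)} \<subseteq> F"
    by auto
  then have fin: "finite {i \<in> carrier H. (if i \<in> F then {(i \<in> P)} else (UNIV :: bool set)) \<noteq> topspace (discrete_topology UNIV)}"
    using F(1) finite_subset by blast
  have opn: "openin (subsets_topology H) U"
    unfolding subsets_topology_def U_def openin_PiE_gen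
    using fin by (auto simp: openin_discrete_topology)
  have zU: "z \<in> U" by (auto simp: z_def U_def set_ind_def)
  have "z \<in> (subsets_topology H) closure_of {set_ind H (right_transl H S h) | h. h \<in> carrier H}"
    using clo zt by simp
  then obtain y where y: "y \<in> {set_ind H (right_transl H S h) | h. h \<in> carrier H}" "y \<in> U"
    using opn zU unfolding in_closure_of by blast
  then obtain h where h: "h \<in> carrier H" "y = set_ind H (right_transl H S h)" by blast
  show ?thesis
  proof (intro bexI[OF _ h(1)] ballI)
    fix p assume pF: "p \<in> F"
    then have pc: "p \<in> carrier H" using F by blast
    have "y p = (p \<in> P)" using y(2) pF pc unfolding U_def by (auto simp: PiE_iff)
    moreover have "y p = (p \<in> right_transl H S h)" using h pc by (simp add: set_ind_def)
    moreover have "(p \<in> right_transl H S h) = (p \<otimes>\<^bsub>H\<^esub> inv\<^bsub>H\<^esub> h \<in> S)"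
    proof
      assume "p \<in> right_transl H S h"
      then obtain s where s: "s \<in> S" "p = s \<otimes>\<^bsub>H\<^esub> h" by (auto simp: right_transl_def)
      moreover have "s \<in> carrier H" using Ssub s(1) by blast
      ultimately have "p \<otimes>\<^bsub>H\<^esub> inv\<^bsub>H\<^esub> h = s" using h by (simp add: H.m_assoc)
      then show "p \<otimes>\<^bsub>H\<^esub> inv\<^bsub>H\<^esub> h \<in> S" using s by simp
    next
      assume "p \<otimes>\<^bsub>H\<^esub> inv\<^bsub>H\<^esub> h \<in> S"
      moreover have "p = (p \<otimes>\<^bsub>H\<^esub> inv\<^bsub>H\<^esub> h) \<otimes>\<^bsub>H\<^esub> h" using pc h by (simp add: H.m_assoc)
      ultimately show "p \<in> right_transl H S h" unfolding right_transl_def by blast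
    qed
    ultimately show "(p \<otimes>\<^bsub>H\<^esub> inv\<^bsub>H\<^esub> h \<in> S) = (p \<in> P)" by simp
  qed
qed

lemma dense_avoid:
  assumes H: "group H" and S: "S \<in> D_R H" and inf: "infinite (carrier H)" and A: "finite A"
  shows "\<forall>F P. finite F \<longrightarrow> F \<subseteq> carrier H \<longrightarrow>
     (\<exists>g\<in>carrier H. g \<notin> A \<and> (\<forall>p\<in>F. (p \<otimes>\<^bsub>H\<^esub> inv\<^bsub>H\<^esub> g \<in> S \<longleftrightarrow> p \<in> P)))"
  using A
proof (induction A rule: finite_induct)
  case empty
  then show ?case using dense_base[OF H S] by blast
next
  case (insert g0 A)
  show ?case
  proof (intro allI impI)
    fix F P assume F: "finite (F :: 'a set)" "F \<subseteq> carrier H"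
    have "infinite (carrier H - F)" using inf F(1) by (rule Diff_infinite_finite[rotated])
    then obtain z where z: "z \<in> carrier H" "z \<notin> F" by (metis Diff_iff finite.emptyI ex_in_conv)
    define P' where "P' = (P - {z}) \<union> (if z \<otimes>\<^bsub>H\<^esub> inv\<^bsub>H\<^esub> g0 \<in> S then {} else {z})"
    obtain g where g: "g \<in> carrier H" "g \<notin> A" "\<forall>p\<in>insert z F. (p \<otimes>\<^bsub>H\<^esub> inv\<^bsub>H\<^esub> g \<in> S \<longleftrightarrow> p \<in> P')"
      using insert.IH[rule_format, of "insert z F" P'] F z by auto
    have "g \<noteq> g0"
    proof
      assume "g = g0"
      then show False using g(3) by (auto simp: P'_def split: if_splits)
    qed
    moreover have "\<forall>p\<in>F. (p \<otimes>\<^bsub>H\<^esub> inv\<^bsub>H\<^esub> g \<in> S \<longleftrightarrow> p \<in> P)"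
      using g(3) z(2) by (auto simp: P'_def)
    ultimately show "\<exists>g\<in>carrier H. g \<notin> insert g0 A \<and> (\<forall>p\<in>F. (p \<otimes>\<^bsub>H\<^esub> inv\<^bsub>H\<^esub> g \<in> S) = (p \<in> P))"
      using g by blast
  qed
qed


lemma eval_one_iff:
  assumes B: "group B" and H: "group H" and xs: "set xs \<subseteq> carrier H"
    and a: "a \<in> carrier B" and b: "b \<in> carrier B"
  shows "eval_W_word B H xs a b Z w = \<one>\<^bsub>wreath_prod B H\<^esub> \<longleftrightarrow>
     (\<forall>x\<in>carrier H. Fz B H xs a b Z w x = \<one>\<^bsub>B\<^esub>) \<and> hw H xs w = \<one>\<^bsub>H\<^esub>"
  unfolding eval_closed[OF assms]
  by (simp add: wreath_prod_def restrict_eq_iff)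

lemma direction:
  assumes B: "group B" and H: "group H" and xs: "set xs \<subseteq> carrier H"
    and inf: "infinite (carrier H)"
    and a: "a \<in> carrier B" and b: "b \<in> carrier B"
    and S: "S \<in> D_R H" and T: "T \<in> D_R H"
    and ST: "S \<inter> ball_H H xs (2 * r) = T \<inter> ball_H H xs (2 * r)"
    and len: "length w \<le> r"
    and one: "eval_W_word B H xs a b S w = \<one>\<^bsub>wreath_prod B H\<^esub>"
  shows "eval_W_word B H xs a b T w = \<one>\<^bsub>wreath_prod B H\<^esub>"
proof -
  interpret H: group H by fact
  have eS: "\<forall>x\<in>carrier H. Fz B H xs a b S w x = \<one>\<^bsub>B\<^esub>" "hw H xs w = \<one>\<^bsub>H\<^esub>"
    using one eval_one_iff[OF B H xs a b] by auto
  have allc: "allpts H xs w \<subseteq> carrier H" by (rule allpts_carrier[OF H xs])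
  have bc: "bpts H xs w \<subseteq> carrier H" using allc bpts_allpts[of H xs w] by blast
  have "\<forall>x\<in>carrier H. Fz B H xs a b T w x = \<one>\<^bsub>B\<^esub>"
  proof
    fix x assume xc: "x \<in> carrier H"
    show "Fz B H xs a b T w x = \<one>\<^bsub>B\<^esub>"
    proof (cases "\<forall>p\<in>bpts H xs w. (p \<otimes>\<^bsub>H\<^esub> x \<in> T \<longleftrightarrow> p \<otimes>\<^bsub>H\<^esub> x \<in> S)")
      case True
      have "Fz B H xs a b T w x = Fz B H xs a b S w x" by (rule loc1[OF H xs xc True])
      then show ?thesis using eS xc by simp
    next
      case False
      then obtain p0 where p0: "p0 \<in> bpts H xs w" "\<not> (p0 \<otimes>\<^bsub>H\<^esub> x \<in> T \<longleftrightarrow> p0 \<otimes>\<^bsub>H\<^esub> x \<in> S)"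
        by blast
      have nb: "p0 \<otimes>\<^bsub>H\<^esub> x \<notin> ball_H H xs (2 * r)"
        using p0(2) ST by blast
      have xa: "\<forall>q\<in>allpts H xs w. q \<otimes>\<^bsub>H\<^esub> x \<noteq> \<one>\<^bsub>H\<^esub>"
      proof (intro ballI notI)
        fix q assume q: "q \<in> allpts H xs w" and e: "q \<otimes>\<^bsub>H\<^esub> x = \<one>\<^bsub>H\<^esub>"
        have qc: "q \<in> carrier H" using q allc by blast
        have "inv\<^bsub>H\<^esub> x = q" using H.inv_equality[OF e xc qc] .
        then have "inv\<^bsub>H\<^esub> q = x" using xc by (metis H.inv_inv)
        then show False using ball_lem[OF H xs p0(1) q len] nb by simp
      qed
      obtain g where g: "g \<in> carrier H" "g \<notin> allpts H xs w"
        "\<forall>p\<in>bpts H xs w. (p \<otimes>\<^bsub>H\<^esub> inv\<^bsub>H\<^esub> g \<in> S \<longleftrightarrow> p \<in> {p. p \<otimes>\<^bsub>H\<^esub> x \<in> T})"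
        using dense_avoid[OF H S inf finite_allpts[of H xs w]] finite_bpts[of H xs w] bc by blast
      have gc: "inv\<^bsub>H\<^esub> g \<in> carrier H" using g by simp
      have ya: "\<forall>q\<in>allpts H xs w. q \<otimes>\<^bsub>H\<^esub> inv\<^bsub>H\<^esub> g \<noteq> \<one>\<^bsub>H\<^esub>"
      proof (intro ballI notI)
        fix q assume q: "q \<in> allpts H xs w" and e: "q \<otimes>\<^bsub>H\<^esub> inv\<^bsub>H\<^esub> g = \<one>\<^bsub>H\<^esub>"
        have qc: "q \<in> carrier H" using q allc by blast
        have "inv\<^bsub>H\<^esub> (inv\<^bsub>H\<^esub> g) = q" using H.inv_equality[OF e gc qc] .
        then have "g = q" using g(1) by simp
        then show False using g(2) q by simp
      qed
      have "Fz B H xs a b T w x = Fz B H xs a b S w (inv\<^bsub>H\<^esub> g)"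
        by (rule loc2[OF H xs xc gc]) (use g(3) xa ya in auto)
      then show ?thesis using eS gc by simp
    qed
  qed
  then show ?thesis using eS(2) eval_one_iff[OF B H xs a b] by simp
qed

theorem lemma3p5:
  fixes B :: "('b, 'c) monoid_scheme" and H :: "('h, 'd) monoid_scheme"
    and xs :: "'h list" and a b :: 'b and S T :: "'h set" and r :: nat
    and w :: "(nat \<times> bool) list"
  assumes "group B" and "group H"
    and "\<not> (\<forall>x\<in>carrier B. \<forall>y\<in>carrier B. x \<otimes>\<^bsub>B\<^esub> y = y \<otimes>\<^bsub>B\<^esub> x)"
    and "set xs \<subseteq> carrier H" and "generate H (set xs) = carrier H"
    and "infinite (carrier H)"
    and "a \<in> carrier B" and "b \<in> carrier B" and "a \<otimes>\<^bsub>B\<^esub> b \<noteq> b \<otimes>\<^bsub>B\<^esub> a"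
    and "S \<in> D_R H" and "T \<in> D_R H"
    and "S \<inter> ball_H H xs (2 * r) = T \<inter> ball_H H xs (2 * r)"
    and "length w \<le> r" and "\<forall>(i, e) \<in> set w. i < length xs + 2"
  shows "eval_W_word B H xs a b S w = \<one>\<^bsub>wreath_prod B H\<^esub> \<longleftrightarrow>
         eval_W_word B H xs a b T w = \<one>\<^bsub>wreath_prod B H\<^esub>"
proof
  assume "eval_W_word B H xs a b S w = \<one>\<^bsub>wreath_prod B H\<^esub>"
  then show "eval_W_word B H xs a b T w = \<one>\<^bsub>wreath_prod B H\<^esub>"
    using direction[OF assms(1,2,4,6,7,8,10,11,12,13)] by blast
next
  assume "eval_W_word B H xs a b T w = \<one>\<^bsub>wreath_prod B H\<^esub>"
  then show "eval_W_word B H xs a b S w = \<one>\<^bsub>wreath_prod B H\<^esub>"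
    using direction[OF assms(1,2,4,6,7,8,11,10) assms(12)[symmetric] assms(13)] by blast
qed

end
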